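(* Let $\mathbb{H}=\mathbb{R}$ or $\mathbb{C}$, let $x,x_0\in\mathbb{H}^d$, and let $\{W_n\}_{n=1}^\infty$ be independent and identically distributed versions of a random subspace $W$ of $\mathbb{H}^d$ which has logarithmic Kaczmarz bound $0\le\alpha_{\log}\le 1$. Define the iterates $x_n=x_{n-1}+P_{W_n}(x)-P_{W_n}(x_{n-1})$ for $n\ge1$. Then $$\exp\left(\mathbb{E}\left[\log\|x-x_n\|^2\right]\right)\le \alpha_{\log}^n\,\|x-x_0\|^2 .$$
   Context: $\mathbb{H}^d$ is $\mathbb{R}^d$ or $\mathbb{C}^d$ with the standard inner product; $\mathbb{S}^{d-1}=\{u\in\mathbb{H}^d:\|u\|=1\}$; $P_W$ denotes the orthogonal projection onto a subspace $W$. A random subspace is a random variable taking values in the set of all linear subspaces of $\mathbb{H}^d$ (dimensions need not be fixed). The logarithmic Kaczmarz bound of a random subspace $W$ is $\alpha_{\log}=\sup_{u\in\mathbb{S}^{d-1}}\exp\left(\mathbb{E}\left[\log(1-\|P_W(u)\|^2)\right]\right)\in[0,1]$ (with $\log 0=-\infty$, $\exp(-\infty)=0$). *)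

theory Defs
  imports "HOL-Probability.Probability"
begin

(* For complex^'d the real inner product is
   Re <x,y>, and for a complex subspace this agrees with the Hermitian
   orthogonal projection. *)
definition proj :: "'a::real_inner set \<Rightarrow> 'a \<Rightarrow> 'a" where
  "proj W u = (THE w. w \<in> W \<and> (\<forall>v\<in>W. inner (u - w) v = 0))"

definition complex_subspace :: "(complex ^ 'd) set \<Rightarrow> bool" where
  "complex_subspace W \<longleftrightarrow> subspace W \<and> (\<forall>c::complex. \<forall>v\<in>W. c *s v \<in> W)"

(* measurable space of subspaces from a given class S: sigma algebra generated by the
   maps W \<mapsto> P_W(u) (equivalently: Borel sets of the Grassmannian topology) *)
definition subspace_measure :: "'a::euclidean_space set set \<Rightarrow> 'a set measure" where
  "subspace_measure S = sigma S {{W \<in> S. proj W u \<in> B} | u B. open B}"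

(* positive and negative parts of log, with log 0 = -\<infinity> *)
definition log_pos :: "real \<Rightarrow> ennreal" where
  "log_pos y = (if y \<le> 0 then 0 else ennreal (ln y))"

definition log_neg :: "real \<Rightarrow> ennreal" where
  "log_neg y = (if y \<le> 0 then \<infinity> else ennreal (- ln y))"

fun eexp :: "ereal \<Rightarrow> ereal" where
  "eexp (ereal r) = ereal (exp r)"
| "eexp PInfty = PInfty"
| "eexp MInfty = 0"

(* exp(E[log Z]) for a nonnegative random variable Z, with exp(-\<infinity>) = 0;
   if E[log Z] is undefined (\<infinity> - \<infinity>) we conservatively set the value to \<infinity> *)
definition exp_expect_log :: "'m measure \<Rightarrow> ('m \<Rightarrow> real) \<Rightarrow> ereal" where
  "exp_expect_log M Z =
     (let p = (\<integral>\<^sup>+ \<omega>. log_pos (Z \<omega>) \<partial>M); q = (\<integral>\<^sup>+ \<omega>. log_neg (Z \<omega>) \<partial>M)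
      in if p = \<infinity> \<and> q = \<infinity> then PInfty else eexp (enn2ereal p - enn2ereal q))"

definition alpha_log :: "'m measure \<Rightarrow> ('m \<Rightarrow> 'a::euclidean_space set) \<Rightarrow> ereal" where
  "alpha_log N W = (SUP u \<in> sphere 0 1. exp_expect_log N (\<lambda>\<omega>. 1 - (norm (proj (W \<omega>) u))\<^sup>2))"

fun kacz :: "(nat \<Rightarrow> 'a::real_inner set) \<Rightarrow> 'a \<Rightarrow> 'a \<Rightarrow> nat \<Rightarrow> 'a" where
  "kacz Ws x x0 0 = x0"
| "kacz Ws x x0 (Suc n) =
     kacz Ws x x0 n + proj (Ws (Suc n)) x - proj (Ws (Suc n)) (kacz Ws x x0 n)"

end

theory Submission
  imports Defs
begin

lemma log_neg_meas[measurable]: "log_neg \<in> borel_measurable borel"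
  unfolding log_neg_def by measurable
lemma log_pos_meas[measurable]: "log_pos \<in> borel_measurable borel"
  unfolding log_pos_def by measurable


lemma ennreal_max0: "ennreal x = ennreal (max x 0)"
  by (cases "x \<le> 0") (auto simp: ennreal_neg max_def)

lemma eexp_minf[simp]: "eexp (- \<infinity>) = 0"
  using eexp.simps(3) by (simp only: MInfty_eq_minfinity)

lemma log_neg_mult:
  assumes "0 \<le> a" "a \<le> 1" "0 \<le> b" "b \<le> 1"
  shows "log_neg (a * b) = log_neg a + log_neg b"
proof (cases "a = 0 \<or> b = 0")
  case True then show ?thesis by (auto simp: log_neg_def)
next
  case False
  then have a: "a > 0" and b: "b > 0" using assms by auto
  have ab: "\<not> a * b \<le> 0" using a b by (simp add: not_le)
  have "log_neg (a * b) = ennreal (- ln a + - ln b)"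
    using a b ab by (simp add: log_neg_def ln_mult)
  also have "\<dots> = ennreal (- ln a) + ennreal (- ln b)"
    using a b assms by (intro ennreal_plus) auto
  finally show ?thesis using a b by (simp add: log_neg_def)
qed

lemma log_ident:
  assumes "0 \<le> f" "f \<le> c" "0 < c"
  shows "log_pos f + log_neg (f / c) + log_neg c = log_neg f + log_pos c"
proof (cases "f = 0")
  case True then show ?thesis using assms by (simp add: log_neg_def)
next
  case False
  then have f: "f > 0" using assms by auto
  have l: "ln (f / c) = ln f - ln c" using f assms by (simp add: ln_div)
  have fc: "\<not> f / c \<le> 0" using f assms by (simp add: not_le)
  have "log_pos f + log_neg (f / c) + log_neg c
      = ennreal (max (ln f) 0) + ennreal (max (ln c - ln f) 0) + ennreal (max (- ln c) 0)"
    using f assms l fc by (simp add: log_pos_def log_neg_def ennreal_max0[symmetric])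
  also have "\<dots> = ennreal (max (ln f) 0 + max (ln c - ln f) 0 + max (- ln c) 0)"
    by (simp add: ennreal_plus)
  also have "max (ln f) 0 + max (ln c - ln f) 0 + max (- ln c) 0 = max (- ln f) 0 + max (ln c) 0"
  proof -
    have "ln f \<le> ln c" using f assms by simp
    then show ?thesis by (auto simp: max_def)
  qed
  also have "ennreal (max (- ln f) 0 + max (ln c) 0) = log_neg f + log_pos c"
    using f assms by (simp add: log_pos_def log_neg_def ennreal_max0[symmetric] ennreal_plus)
  finally show ?thesis .
qed

lemma eel_bound:
  fixes M :: "'m measure"
  assumes PM: "prob_space M" and c: "0 < c" and fm: "f \<in> borel_measurable M"
    and fb: "\<And>\<omega>. \<omega> \<in> space M \<Longrightarrow> 0 \<le> f \<omega> \<and> f \<omega> \<le> c"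
  defines "A \<equiv> (\<integral>\<^sup>+\<omega>. log_neg (f \<omega> / c) \<partial>M)"
  shows "exp_expect_log M f \<le> (if A = \<infinity> then 0 else ereal (c * exp (- enn2real A)))"
proof -
  interpret prob_space M by (rule PM)
  define p where "p = (\<integral>\<^sup>+\<omega>. log_pos (f \<omega>) \<partial>M)"
  define q where "q = (\<integral>\<^sup>+\<omega>. log_neg (f \<omega>) \<partial>M)"
  have m1: "(\<lambda>\<omega>. log_pos (f \<omega>)) \<in> borel_measurable M" using fm by measurable
  have m2: "(\<lambda>\<omega>. log_neg (f \<omega> / c)) \<in> borel_measurable M" using fm by measurable
  have m3: "(\<lambda>\<omega>. log_neg (f \<omega>)) \<in> borel_measurable M" using fm by measurable
  have "(\<integral>\<^sup>+\<omega>. log_pos (f \<omega>) + log_neg (f \<omega> / c) + log_neg c \<partial>M)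
      = (\<integral>\<^sup>+\<omega>. log_neg (f \<omega>) + log_pos c \<partial>M)"
  proof (rule nn_integral_cong)
    fix \<omega> assume "\<omega> \<in> space M"
    then show "log_pos (f \<omega>) + log_neg (f \<omega> / c) + log_neg c = log_neg (f \<omega>) + log_pos c"
      using fb c by (intro log_ident) auto
  qed
  moreover have "(\<integral>\<^sup>+\<omega>. log_pos (f \<omega>) + log_neg (f \<omega> / c) + log_neg c \<partial>M) = p + A + log_neg c"
    unfolding p_def A_def using m1 m2
    by (subst nn_integral_add, measurable, subst nn_integral_add, measurable) (simp add: emeasure_space_1)
  moreover have "(\<integral>\<^sup>+\<omega>. log_neg (f \<omega>) + log_pos c \<partial>M) = q + log_pos c"
    unfolding q_def using m3
    by (subst nn_integral_add, measurable) (simp add: emeasure_space_1)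
  ultimately have eq: "p + A + log_neg c = q + log_pos c" by simp
  have lpc: "log_pos c = ennreal (max (ln c) 0)" and lnc: "log_neg c = ennreal (max (- ln c) 0)"
    using c by (simp_all add: log_pos_def log_neg_def ennreal_max0[symmetric])
  have "p \<le> (\<integral>\<^sup>+\<omega>. log_pos c \<partial>M)"
    unfolding p_def
  proof (rule nn_integral_mono)
    fix \<omega> assume w: "\<omega> \<in> space M"
    show "log_pos (f \<omega>) \<le> log_pos c"
    proof (cases "f \<omega> \<le> 0")
      case True then show ?thesis by (simp add: log_pos_def)
    next
      case False
      then have "ln (f \<omega>) \<le> ln c" using fb[OF w] c by simp
      then show ?thesis using False c by (simp add: log_pos_def ennreal_leI)
    qed
  qed
  then have "p \<le> log_pos c" by (simp add: emeasure_space_1)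
  then have pl: "p \<le> ennreal (max (ln c) 0)" using lpc by simp
  have pfin: "p < \<infinity>" using le_less_trans[OF pl ennreal_less_top] by simp
  then obtain P where P: "p = ennreal P" "0 \<le> P" by (cases p) auto
  show ?thesis
  proof (cases "A = \<infinity>")
    case True
    then have "q + log_pos c = \<infinity>" using eq by simp
    then have "q = \<infinity>" using lpc by (simp add:)
    then show ?thesis unfolding exp_expect_log_def Let_def
      using True P by (simp flip: p_def q_def)
  next
    case False
    then obtain a where a: "A = ennreal a" "0 \<le> a" by (cases A) auto
    have "q \<noteq> \<infinity>" using eq P a lnc lpc by (auto simp:)
    then obtain Q where Q: "q = ennreal Q" "0 \<le> Q" by (cases q) auto
    have "ennreal (P + a + max (- ln c) 0) = ennreal (Q + max (ln c) 0)"
      using eq P a Q lnc lpc by (simp add: ennreal_plus)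
    then have "P + a + max (- ln c) 0 = Q + max (ln c) 0"
      using P a Q by (subst (asm) ennreal_inj) auto
    then have PQ: "P - Q = ln c - a" by (cases "0 \<le> ln c") (auto simp: max_def)
    have "exp_expect_log M f = eexp (ereal (P - Q))"
      unfolding exp_expect_log_def Let_def using P Q by (simp flip: p_def q_def)
    also have "\<dots> = ereal (c * exp (- a))" 
    proof -
      have "exp (P - Q) = c * exp (- a)" unfolding PQ using c by (simp add: exp_diff exp_minus divide_inverse)
      then show ?thesis by simp
    qed
    finally show ?thesis using a False by simp
  qed
qed




lemma proj_ex:
  fixes V :: "'a::euclidean_space set"
  assumes "subspace V"
  shows "proj V u \<in> V \<and> (\<forall>v\<in>V. inner (u - proj V u) v = 0)"
proof -
  obtain y z where y: "y \<in> span V" and z: "\<And>w. w \<in> span V \<Longrightarrow> orthogonal z w" and u: "u = y + z"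
    using orthogonal_subspace_decomp_exists[of V u] by blast
  have sp: "span V = V" using assms by (simp add: span_eq_iff)
  have ex: "y \<in> V \<and> (\<forall>v\<in>V. inner (u - y) v = 0)"
    using y z u sp by (auto simp: orthogonal_def)
  have uniq: "w = y" if "w \<in> V \<and> (\<forall>v\<in>V. inner (u - w) v = 0)" for w
  proof -
    have d: "y - w \<in> V" using that ex assms by (simp add: subspace_diff)
    have "inner (u - w) (y - w) = 0" "inner (u - y) (y - w) = 0" using that ex d by auto
    then have "inner (y - w) (y - w) = 0" by (simp add: inner_diff_left)
    then show ?thesis by simp
  qed
  have "proj V u = y" unfolding proj_def using ex uniq by (rule the_equality)
  then show ?thesis using ex by simp
qed

lemma proj_unique:
  fixes V :: "'a::euclidean_space set"
  assumes "subspace V" "w \<in> V" "\<forall>v\<in>V. inner (u - w) v = 0"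
  shows "proj V u = w"
proof -
  have ex: "proj V u \<in> V \<and> (\<forall>v\<in>V. inner (u - proj V u) v = 0)" using proj_ex[OF assms(1)] .
  have d: "proj V u - w \<in> V" using ex assms by (simp add: subspace_diff)
  have "inner (u - w) (proj V u - w) = 0" "inner (u - proj V u) (proj V u - w) = 0" using assms ex d by auto
  then have "inner (proj V u - w) (proj V u - w) = 0" by (simp add: inner_diff_left inner_diff_right algebra_simps)
  then show ?thesis by simp
qed

lemma proj_linear:
  fixes V :: "'a::euclidean_space set"
  assumes "subspace V"
  shows "linear (proj V)"
proof
  fix a b
  show "proj V (a + b) = proj V a + proj V b"
    apply (rule proj_unique[OF assms])
    using proj_ex[OF assms, of a] proj_ex[OF assms, of b] assms
    by (auto simp: subspace_add inner_diff_left inner_add_left algebra_simps)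
next
  fix r a
  show "proj V (r *\<^sub>R a) = r *\<^sub>R proj V a"
    apply (rule proj_unique[OF assms])
    using proj_ex[OF assms, of a] assms
    by (auto simp: subspace_scale inner_diff_left  algebra_simps)
qed

lemma proj_pyth:
  fixes V :: "'a::euclidean_space set"
  assumes "subspace V"
  shows "(norm (u - proj V u))\<^sup>2 = (norm u)\<^sup>2 - (norm (proj V u))\<^sup>2"
proof -
  have "orthogonal (proj V u) (u - proj V u)" using proj_ex[OF assms, of u]
    by (simp add: orthogonal_def inner_commute)
  from norm_add_Pythagorean[OF this] show ?thesis by simp
qed

lemma proj_norm_le:
  fixes V :: "'a::euclidean_space set"
  assumes "subspace V"
  shows "norm (proj V u) \<le> norm u"
proof -
  have "(norm (proj V u))\<^sup>2 \<le> (norm u)\<^sup>2" using proj_pyth[OF assms, of u]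
    by (metis diff_ge_0_iff_ge zero_le_power2)
  then show ?thesis by (simp add: power2_le_iff_abs_le)
qed

lemma proj_sum:
  fixes V :: "'a::euclidean_space set"
  assumes "subspace V"
  shows "proj V v = (\<Sum>b\<in>Basis. (inner v b) *\<^sub>R proj V b)"
proof -
  have "proj V v = proj V (\<Sum>b\<in>Basis. (inner v b) *\<^sub>R b)" by (simp add: euclidean_representation)
  also have "\<dots> = (\<Sum>b\<in>Basis. (inner v b) *\<^sub>R proj V b)"
    using proj_linear[OF assms] by (simp add: linear_sum linear_scale)
  finally show ?thesis .
qed




lemma space_subspace_measure[simp]: "space (subspace_measure C) = C"
  unfolding subspace_measure_def by (rule space_measure_of) auto

lemma meas_proj_fixed[measurable]:
  "(\<lambda>V. proj V u) \<in> borel_measurable (subspace_measure C)"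
proof (rule borel_measurableI)
  fix B :: "'a set" assume "open B"
  have "(\<lambda>V. proj V u) -` B \<inter> space (subspace_measure C) = {W \<in> C. proj W u \<in> B}" by auto
  moreover have "{W \<in> C. proj W u \<in> B} \<in> sets (subspace_measure C)"
    unfolding subspace_measure_def
    apply (subst sets_measure_of) apply blast
    apply (rule sigma_sets.Basic) using \<open>open B\<close> by blast
  ultimately show "(\<lambda>V. proj V u) -` B \<inter> space (subspace_measure C) \<in> sets (subspace_measure C)" by simp
qed

lemma meas_proj_joint:
  fixes C :: "'a::euclidean_space set set"
  assumes sub: "\<forall>V\<in>C. subspace V"
  shows "(\<lambda>p. proj (fst p) (snd p)) \<in> borel_measurable (subspace_measure C \<Otimes>\<^sub>M (borel :: 'a measure))"
proof -
  have m: "(\<lambda>p. \<Sum>b\<in>Basis. (inner (snd p) b) *\<^sub>R proj (fst p) b) \<in> borel_measurable (subspace_measure C \<Otimes>\<^sub>M (borel :: 'a measure))"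
    by measurable
  show ?thesis
    apply (rule measurable_cong[THEN iffD1, OF _ m])
    using sub by (auto simp: space_pair_measure proj_sum)
qed

lemma meas_proj_comp:
  fixes C :: "'a::euclidean_space set set"
  assumes sub: "\<forall>V\<in>C. subspace V" and F: "F \<in> M \<rightarrow>\<^sub>M subspace_measure C" and G: "G \<in> borel_measurable M"
  shows "(\<lambda>\<omega>. proj (F \<omega>) (G \<omega>)) \<in> borel_measurable M"
  using measurable_compose[OF measurable_Pair[OF F G] meas_proj_joint[OF sub]] by simp

lemma kacz_meas:
  fixes C :: "'a::euclidean_space set set"
  assumes sub: "\<forall>V\<in>C. subspace V" and F: "\<forall>k\<in>{1..m}. (\<lambda>\<omega>. F \<omega> k) \<in> M' \<rightarrow>\<^sub>M subspace_measure C"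
  shows "(\<lambda>\<omega>. kacz (F \<omega>) x x0 m) \<in> borel_measurable M'"
  using F
proof (induction m)
  case 0
  then show ?case by simp
next
  case (Suc m)
  then have IH: "(\<lambda>\<omega>. kacz (F \<omega>) x x0 m) \<in> borel_measurable M'" by auto
  have Fm: "(\<lambda>\<omega>. F \<omega> (Suc m)) \<in> M' \<rightarrow>\<^sub>M subspace_measure C" using Suc.prems by auto
  have a: "(\<lambda>\<omega>. proj (F \<omega> (Suc m)) x) \<in> borel_measurable M'"
    by (rule meas_proj_comp[OF sub Fm]) simp
  have b: "(\<lambda>\<omega>. proj (F \<omega> (Suc m)) (kacz (F \<omega>) x x0 m)) \<in> borel_measurable M'"
    by (rule meas_proj_comp[OF sub Fm IH])
  show ?case using IH a b by simp
qed

lemma kacz_cong: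
  "(\<forall>i\<in>{1..m}. F i = G i) \<Longrightarrow> kacz F x x0 m = kacz G x x0 m"
  by (induction m) auto




definition unitv :: "'a::real_normed_vector \<Rightarrow> 'a \<Rightarrow> 'a" where
  "unitv u0 e = (if e = 0 then u0 else (1 / norm e) *\<^sub>R e)"

lemma unitv_meas[measurable]: "unitv (u0::'a::euclidean_space) \<in> borel_measurable borel"
proof -
  have a: "(\<lambda>x::'a. (1 / norm x) *\<^sub>R x) \<in> borel_measurable borel"
    by measurable
  have b: "{e \<in> space borel. e = (0::'a)} = {0}" by auto
  have c: "{e \<in> space borel. e = (0::'a)} \<in> sets borel" unfolding b by (rule borel_closed) simp
  show ?thesis unfolding unitv_def
    by (rule measurable_If[OF measurable_const a c]) simp
qed

lemma unitv_sphere: "norm u0 = 1 \<Longrightarrow> norm (unitv u0 e) = 1"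
  by (auto simp: unitv_def)

lemma indep_step:
  fixes C :: "'a::euclidean_space set set" and N :: "'n measure" and W :: "'n \<Rightarrow> 'a set"
    and M :: "'m measure" and Ws :: "nat \<Rightarrow> 'm \<Rightarrow> 'a set"
  assumes sub: "\<forall>V\<in>C. subspace V"
  and PN: "prob_space N" and Wm: "W \<in> N \<rightarrow>\<^sub>M subspace_measure C"
  and PM: "prob_space M" and Wsm: "\<forall>k\<ge>1. Ws k \<in> M \<rightarrow>\<^sub>M subspace_measure C"
  and ind: "prob_space.indep_vars M (\<lambda>_. subspace_measure C) Ws {1..}"
  and dist: "\<forall>k\<ge>1. distr M (subspace_measure C) (Ws k) = distr N (subspace_measure C) W"
  and u0: "norm u0 = 1"
  and bnd: "\<forall>u\<in>sphere 0 1. b \<le> (\<integral>\<^sup>+\<eta>. log_neg (1 - (norm (proj (W \<eta>) u))\<^sup>2) \<partial>N)"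
  shows "b \<le> (\<integral>\<^sup>+\<omega>. log_neg (1 - (norm (proj (Ws (Suc n) \<omega>) (unitv u0 (x - kacz (\<lambda>k. Ws k \<omega>) x x0 n))))\<^sup>2) \<partial>M)"
proof -
  interpret M: prob_space M by (rule PM)
  define S where "S = subspace_measure C"
  have iv: "M.indep_var (PiM {1..n} (\<lambda>_. S)) (\<lambda>\<omega>. restrict (\<lambda>i. Ws i \<omega>) {1..n})
      (PiM {Suc n} (\<lambda>_. S)) (\<lambda>\<omega>. restrict (\<lambda>i. Ws i \<omega>) {Suc n})"
    unfolding S_def by (rule M.indep_var_restrict[OF ind]) auto
  define G where "G g = unitv u0 (x - kacz g x x0 n)" for g
  have Km: "(\<lambda>g. kacz g x x0 n) \<in> borel_measurable (PiM {1..n} (\<lambda>_. S))"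
    apply (rule kacz_meas[OF sub])
    unfolding S_def by (auto intro: measurable_component_singleton)
  have Gm: "G \<in> borel_measurable (PiM {1..n} (\<lambda>_. S))"
    unfolding G_def using Km by measurable
  have H: "(\<lambda>g. g (Suc n)) \<in> PiM {Suc n} (\<lambda>_. S) \<rightarrow>\<^sub>M S"
    by (rule measurable_component_singleton) simp
  define X1 where "X1 \<omega> = restrict (\<lambda>i. Ws i \<omega>) {1..n}" for \<omega>
  define X2 where "X2 \<omega> = restrict (\<lambda>i. Ws i \<omega>) {Suc n}" for \<omega>
  define P1 where "P1 = PiM {1..n} (\<lambda>_. S)"
  define P2 where "P2 = PiM {Suc n} (\<lambda>_. S)"
  have X1m: "X1 \<in> M \<rightarrow>\<^sub>M P1" and X2m: "X2 \<in> M \<rightarrow>\<^sub>M P2"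
    and deq: "distr M P1 X1 \<Otimes>\<^sub>M distr M P2 X2 = distr M (P1 \<Otimes>\<^sub>M P2) (\<lambda>\<omega>. (X1 \<omega>, X2 \<omega>))"
    using iv unfolding M.indep_var_distribution_eq X1_def X2_def P1_def P2_def by auto
  define l where "l p = log_neg (1 - (norm (proj (snd p) (fst p)))\<^sup>2)" for p :: "'a \<times> 'a set"
  have pj: "(\<lambda>p. proj (snd p) (fst p)) \<in> borel_measurable (borel \<Otimes>\<^sub>M S)"
    using measurable_compose[OF measurable_Pair[OF measurable_snd measurable_fst] meas_proj_joint[OF sub]]
    unfolding S_def by simp
  have lm: "l \<in> borel_measurable (borel \<Otimes>\<^sub>M S)"
    unfolding l_def using pj by measurable
  define l' where "l' q = l (G (fst q), snd q (Suc n))" for q :: "(nat \<Rightarrow> 'a set) \<times> (nat \<Rightarrow> 'a set)"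
  have Gm': "(\<lambda>q. G (fst q)) \<in> borel_measurable (P1 \<Otimes>\<^sub>M P2)"
    using measurable_compose[OF measurable_fst Gm] unfolding P1_def by simp
  have Hm': "(\<lambda>q. snd q (Suc n)) \<in> (P1 \<Otimes>\<^sub>M P2) \<rightarrow>\<^sub>M S"
    using measurable_compose[OF measurable_snd H] unfolding P2_def by simp
  have l'm: "l' \<in> borel_measurable (P1 \<Otimes>\<^sub>M P2)"
    unfolding l'_def using measurable_compose[OF measurable_Pair[OF Gm' Hm'] lm] by simp
  define PX where "PX = distr M P2 X2"
  define PY where "PY = distr M P1 X1"
  interpret PX: prob_space PX unfolding PX_def by (rule M.prob_space_distr[OF X2m])
  interpret PY: prob_space PY unfolding PY_def by (rule M.prob_space_distr[OF X1m])
  have "(\<integral>\<^sup>+\<omega>. l' (X1 \<omega>, X2 \<omega>) \<partial>M) = (\<integral>\<^sup>+p. l' p \<partial>distr M (P1 \<Otimes>\<^sub>M P2) (\<lambda>\<omega>. (X1 \<omega>, X2 \<omega>)))"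
    by (rule nn_integral_distr[symmetric]) (auto simp: X1m X2m l'm measurable_Pair)
  also have "\<dots> = (\<integral>\<^sup>+p. l' p \<partial>(PY \<Otimes>\<^sub>M PX))"
    unfolding PX_def PY_def deq ..
  also have "\<dots> = (\<integral>\<^sup>+y. \<integral>\<^sup>+V. l' (y, V) \<partial>PX \<partial>PY)"
  proof (rule PX.nn_integral_fst[symmetric])
    have se: "sets (PY \<Otimes>\<^sub>M PX) = sets (P1 \<Otimes>\<^sub>M P2)" by (intro sets_pair_measure_cong) (simp_all add: PX_def PY_def)
    then show "l' \<in> borel_measurable (PY \<Otimes>\<^sub>M PX)" by (simp add: measurable_cong_sets[OF se refl] l'm)
  qed
  finally have eq: "(\<integral>\<^sup>+\<omega>. l' (X1 \<omega>, X2 \<omega>) \<partial>M) = (\<integral>\<^sup>+y. \<integral>\<^sup>+V. l' (y, V) \<partial>PX \<partial>PY)" .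
  have inner: "b \<le> (\<integral>\<^sup>+V. l' (y, V) \<partial>PX)" for y
  proof -
    have ly: "(\<lambda>V. l (G y, V)) \<in> borel_measurable S" unfolding l_def S_def snd_conv fst_conv by measurable
    have "(\<integral>\<^sup>+V. l' (y, V) \<partial>PX) = (\<integral>\<^sup>+\<omega>. l (G y, X2 \<omega> (Suc n)) \<partial>M)"
      unfolding PX_def l'_def fst_conv snd_conv
      apply (rule nn_integral_distr[OF X2m])
      using measurable_compose[OF H ly] unfolding P2_def by simp
    also have "\<dots> = (\<integral>\<^sup>+\<omega>. l (G y, Ws (Suc n) \<omega>) \<partial>M)" by (simp add: X2_def)
    also have "\<dots> = (\<integral>\<^sup>+V. l (G y, V) \<partial>distr M S (Ws (Suc n)))"
      using Wsm ly by (subst nn_integral_distr) (auto simp: S_def)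
    also have "\<dots> = (\<integral>\<^sup>+V. l (G y, V) \<partial>distr N S W)" using dist by (simp add: S_def)
    also have "\<dots> = (\<integral>\<^sup>+\<eta>. l (G y, W \<eta>) \<partial>N)"
      using Wm ly by (subst nn_integral_distr) (auto simp: S_def)
    finally have "(\<integral>\<^sup>+V. l' (y, V) \<partial>PX) = (\<integral>\<^sup>+\<eta>. l (G y, W \<eta>) \<partial>N)" .
    moreover have "G y \<in> sphere 0 1" using u0 by (simp add: G_def unitv_sphere)
    ultimately show ?thesis using bnd by (simp add: l_def)
  qed
  have "b = (\<integral>\<^sup>+y. b \<partial>PY)" by (simp add: PY.emeasure_space_1)
  also have "\<dots> \<le> (\<integral>\<^sup>+y. \<integral>\<^sup>+V. l' (y, V) \<partial>PX \<partial>PY)"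
    by (rule nn_integral_mono) (use inner in auto)
  finally have fin: "b \<le> (\<integral>\<^sup>+\<omega>. l' (X1 \<omega>, X2 \<omega>) \<partial>M)" using eq by simp
  have "l' (X1 \<omega>, X2 \<omega>) = log_neg (1 - (norm (proj (Ws (Suc n) \<omega>) (unitv u0 (x - kacz (\<lambda>k. Ws k \<omega>) x x0 n))))\<^sup>2)" for \<omega>
    unfolding l'_def l_def G_def X1_def X2_def
    by (simp, subst kacz_cong[of n _ "\<lambda>k. Ws k \<omega>"], auto)
  then show ?thesis using fin by simp
qed




lemma kacz_err:
  fixes V :: "'a::euclidean_space set"
  assumes "subspace V"
  shows "x - (k + proj V x - proj V k) = (x - k) - proj V (x - k)"
  using linear_diff[OF proj_linear[OF assms], of x k] by (simp add: algebra_simps)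

lemma err_sq:
  fixes V :: "'a::euclidean_space set"
  assumes V: "subspace V" and u0: "norm u0 = 1"
  shows "(norm (e - proj V e))\<^sup>2 = (norm e)\<^sup>2 * (1 - (norm (proj V (unitv u0 e)))\<^sup>2)"
proof (cases "e = 0")
  case True
  then show ?thesis using linear_0[OF proj_linear[OF V]] by simp
next
  case False
  have "proj V e = proj V (norm e *\<^sub>R unitv u0 e)" using False by (simp add: unitv_def)
  also have "\<dots> = norm e *\<^sub>R proj V (unitv u0 e)" using linear_scale[OF proj_linear[OF V]] by simp
  finally have pe: "(norm (proj V e))\<^sup>2 = (norm e)\<^sup>2 * (norm (proj V (unitv u0 e)))\<^sup>2"
    by (simp add: power_mult_distrib)
  show ?thesis using proj_pyth[OF V, of e] pe by (simp add: algebra_simps)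
qed

lemma fac_bounds:
  fixes V :: "'a::euclidean_space set"
  assumes V: "subspace V" and u: "norm u = 1"
  shows "0 \<le> 1 - (norm (proj V u))\<^sup>2" "1 - (norm (proj V u))\<^sup>2 \<le> 1"
proof -
  have "norm (proj V u) \<le> 1" using proj_norm_le[OF V, of u] u by simp
  then have "(norm (proj V u))\<^sup>2 \<le> 1" by (simp add: power_le_one)
  then show "0 \<le> 1 - (norm (proj V u))\<^sup>2" by simp
  show "1 - (norm (proj V u))\<^sup>2 \<le> 1" by simp
qed

lemma eexp_inf[simp]: "eexp \<infinity> = \<infinity>"
  using eexp.simps(2) by (simp only: PInfty_eq_infinity)

lemma eexp_nonneg: "0 \<le> eexp x"
  by (cases x) auto

lemma eexp_neg_le1: "eexp (- enn2ereal t) \<le> 1"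
  by (cases t) auto

lemma enn2ereal_zero: "enn2ereal 0 = 0"
  using enn2ereal_ennreal[of 0] by simp

lemma eexp_zero_minus: "eexp (enn2ereal 0 - enn2ereal q) = eexp (- enn2ereal q)"
  by (cases q) (auto simp: enn2ereal_zero)

lemma final_cmp:
  fixes \<alpha> :: ereal and A b :: ennreal
  assumes al0: "0 \<le> \<alpha>" and al1: "\<alpha> \<le> 1" and c: "0 < c" and nb: "of_nat n * b \<le> A"
    and b: "b = (if \<alpha> = 0 then \<infinity> else ennreal (- ln (real_of_ereal \<alpha>)))"
  shows "(if A = \<infinity> then 0 else ereal (c * exp (- enn2real A))) \<le> \<alpha> ^ n * ereal c"
proof -
  obtain r where r: "\<alpha> = ereal r" "0 \<le> r" "r \<le> 1" using al0 al1 by (cases \<alpha>) auto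
  have rhs: "\<alpha> ^ n * ereal c = ereal (r ^ n * c)" using r by simp
  show ?thesis
  proof (cases "A = \<infinity>")
    case True then show ?thesis using rhs r c by simp
  next
    case False
    then obtain t where t: "A = ennreal t" "0 \<le> t" by (cases A) auto
    have "exp (- t) \<le> r ^ n"
    proof (cases "r = 0")
      case True
      then have "b = \<infinity>" using b r by (simp add: zero_ereal_def)
      then have "n = 0" using nb t by (cases "n = 0") (auto simp: ennreal_mult_eq_top_iff top_unique)
      then show ?thesis using t by simp
    next
      case False
      then have rp: "0 < r" using r by simp
      then have "b = ennreal (- ln r)" using b r by (simp add: zero_ereal_def)
      then have "ennreal (real n * (- ln r)) \<le> ennreal t"
        using nb t rp r by (simp add: ennreal_of_nat_eq_real_of_nat ennreal_mult[symmetric])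
      then have "real n * (- ln r) \<le> t" using t by simp
      then have "exp (- t) \<le> exp (real n * ln r)" by simp
      also have "\<dots> = r ^ n" using rp by (simp add: exp_of_nat_mult)
      finally show ?thesis .
    qed
    then have "c * exp (- t) \<le> r ^ n * c" using c by (simp add: mult.commute)
    then show ?thesis using t False rhs by simp
  qed
qed

lemma log_pos_le1: "y \<le> 1 \<Longrightarrow> log_pos y = 0"
  by (auto simp: log_pos_def ennreal_neg)

theorem main_gen:
  fixes C :: "'a::euclidean_space set set" and N :: "'n measure" and W :: "'n \<Rightarrow> 'a set"
    and M :: "'m measure" and Ws :: "nat \<Rightarrow> 'm \<Rightarrow> 'a set" and x x0 :: 'a and n :: nat
  assumes sub: "\<forall>V\<in>C. subspace V"
  and PN: "prob_space N" and Wm: "W \<in> N \<rightarrow>\<^sub>M subspace_measure C"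
  and PM: "prob_space M" and Wsm: "\<forall>k\<ge>1. Ws k \<in> M \<rightarrow>\<^sub>M subspace_measure C"
  and ind: "prob_space.indep_vars M (\<lambda>_. subspace_measure C) Ws {1..}"
  and dist: "\<forall>k\<ge>1. distr M (subspace_measure C) (Ws k) = distr N (subspace_measure C) W"
  shows "exp_expect_log M (\<lambda>\<omega>. (norm (x - kacz (\<lambda>k. Ws k \<omega>) x x0 n))\<^sup>2)
            \<le> (alpha_log N W) ^ n * ereal ((norm (x - x0))\<^sup>2)"
proof -
  interpret M: prob_space M by (rule PM)
  interpret N: prob_space N by (rule PN)
  define u0 :: 'a where "u0 = (SOME b. b \<in> Basis)"
  have u0: "norm u0 = 1" unfolding u0_def by (simp add: SOME_Basis)
  define c where "c = (norm (x - x0))\<^sup>2"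
  define e where "e k \<omega> = x - kacz (\<lambda>k. Ws k \<omega>) x x0 k" for k \<omega>
  define f where "f k \<omega> = (norm (e k \<omega>))\<^sup>2" for k \<omega>
  define U where "U k \<omega> = unitv u0 (e k \<omega>)" for k \<omega>
  define l where "l V u = log_neg (1 - (norm (proj V u))\<^sup>2)" for V :: "'a set" and u :: 'a
  define g where "g k \<omega> = 1 - (norm (proj (Ws (Suc k) \<omega>) (U k \<omega>)))\<^sup>2" for k \<omega>
  have WsC: "Ws k \<omega> \<in> C" if "\<omega> \<in> space M" "k \<ge> 1" for k \<omega>
    using measurable_space[of "Ws k" M "subspace_measure C" \<omega>] Wsm that by auto
  have Usph: "norm (U k \<omega>) = 1" for k \<omega> unfolding U_def using u0 by (rule unitv_sphere)
  have gb: "0 \<le> g k \<omega> \<and> g k \<omega> \<le> 1" if "\<omega> \<in> space M" for k \<omega>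
    unfolding g_def using fac_bounds[OF _ Usph] sub WsC[OF that, of "Suc k"] by auto
  have rec: "f (Suc k) \<omega> = f k \<omega> * g k \<omega>" if "\<omega> \<in> space M" for k \<omega>
  proof -
    have V: "subspace (Ws (Suc k) \<omega>)" using sub WsC[OF that, of "Suc k"] by auto
    have "e (Suc k) \<omega> = e k \<omega> - proj (Ws (Suc k) \<omega>) (e k \<omega>)"
      unfolding e_def by (simp add: kacz_err[OF V])
    then show ?thesis unfolding f_def g_def U_def using err_sq[OF V u0] by simp
  qed
  have fb: "0 \<le> f k \<omega> \<and> f k \<omega> \<le> c" if "\<omega> \<in> space M" for k \<omega>
  proof (induction k)
    case 0 then show ?case by (simp add: f_def e_def c_def)
  next
    case (Suc k)
    have "f k \<omega> * g k \<omega> \<le> f k \<omega> * 1" using Suc gb[OF that, of k] by (intro mult_left_mono) auto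
    then show ?case using rec[OF that, of k] Suc gb[OF that, of k] by auto
  qed
  have Wsm': "\<forall>k\<in>{1..m}. (\<lambda>\<omega>. Ws k \<omega>) \<in> M \<rightarrow>\<^sub>M subspace_measure C" for m using Wsm by auto
  have em: "e k \<in> borel_measurable M" for k
    unfolding e_def using kacz_meas[OF sub Wsm'] by measurable
  have fm: "f k \<in> borel_measurable M" for k unfolding f_def using em by measurable
  have gm: "g k \<in> borel_measurable M" for k
  proof -
    have "(\<lambda>\<omega>. proj (Ws (Suc k) \<omega>) (U k \<omega>)) \<in> borel_measurable M"
      apply (rule meas_proj_comp[OF sub])
      using Wsm apply simp
      unfolding U_def using em by measurable
    then show ?thesis unfolding g_def by measurable
  qed
  define a where "a u = (\<integral>\<^sup>+\<eta>. l (W \<eta>) u \<partial>N)" for u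
  have eel_u: "exp_expect_log N (\<lambda>\<eta>. 1 - (norm (proj (W \<eta>) u))\<^sup>2) = eexp (- enn2ereal (a u))" for u
  proof -
    have "(\<integral>\<^sup>+\<eta>. log_pos (1 - (norm (proj (W \<eta>) u))\<^sup>2) \<partial>N) = (\<integral>\<^sup>+\<eta>. 0 \<partial>N)"
      by (rule nn_integral_cong) (simp add: log_pos_le1)
    then show ?thesis unfolding exp_expect_log_def Let_def a_def l_def by (simp add: eexp_zero_minus)
  qed
  define \<alpha> where "\<alpha> = alpha_log N W"
  have le_al: "eexp (- enn2ereal (a u)) \<le> \<alpha>" if "u \<in> sphere 0 1" for u
    unfolding \<alpha>_def alpha_log_def by (rule SUP_upper2[OF that]) (simp add: eel_u)
  have u0s: "u0 \<in> sphere 0 1" using u0 by simp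
  have al0: "0 \<le> \<alpha>" by (rule order_trans[OF eexp_nonneg le_al[OF u0s]])
  have al1: "\<alpha> \<le> 1" unfolding \<alpha>_def alpha_log_def
    by (rule SUP_least) (simp add: eel_u eexp_neg_le1)
  define b where "b = (if \<alpha> = 0 then \<infinity> else ennreal (- ln (real_of_ereal \<alpha>)))"
  have bnd: "b \<le> a u" if u: "u \<in> sphere 0 1" for u
  proof (cases "a u = \<infinity>")
    case True then show ?thesis by simp
  next
    case False
    then obtain t where t: "a u = ennreal t" "0 \<le> t" by (cases "a u") auto
    have h: "ereal (exp (- t)) \<le> \<alpha>" using le_al[OF u] t by simp
    show ?thesis
    proof (cases "\<alpha> = 0")
      case True
      then show ?thesis using h by (simp add: zero_ereal_def)
    next
      case False
      obtain r where r: "\<alpha> = ereal r" using al0 al1 by (cases \<alpha>) auto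
      have rp: "0 < r" using al0 False r by (simp add: zero_ereal_def)
      have "exp (- t) \<le> r" using h r by simp
      then have "ln (exp (- t)) \<le> ln r" using rp by (subst ln_le_cancel_iff) auto
      then have "- ln r \<le> t" by simp
      then show ?thesis using t False r by (simp add: b_def)
    qed
  qed
  have fn: "(\<lambda>\<omega>. (norm (x - kacz (\<lambda>k. Ws k \<omega>) x x0 n))\<^sup>2) = f n"
    by (rule ext) (simp add: f_def e_def)
  show ?thesis
  proof (cases "c = 0")
    case True
    then have f0: "f n \<omega> = 0" if "\<omega> \<in> space M" for \<omega> using fb[OF that, of n] by simp
    have p0: "(\<integral>\<^sup>+\<omega>. log_pos (f n \<omega>) \<partial>M) = 0"
      by (subst nn_integral_cong[where v = "\<lambda>_. 0"]) (simp_all add: f0 log_pos_def)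
    have q0: "(\<integral>\<^sup>+\<omega>. log_neg (f n \<omega>) \<partial>M) = \<infinity>"
      by (subst nn_integral_cong[where v = "\<lambda>_. \<infinity>"]) (simp_all add: f0 log_neg_def M.emeasure_space_1)
    have "exp_expect_log M (f n) = 0"
      unfolding exp_expect_log_def Let_def p0 q0 by (simp add: enn2ereal_zero)
    then show ?thesis unfolding fn using True by (simp add: c_def zero_ereal_def[symmetric])
  next
    case False
    then have c: "0 < c" unfolding c_def by simp
    define L where "L k \<omega> = log_neg (f k \<omega> / c)" for k \<omega>
    have Lrec: "L (Suc k) \<omega> = L k \<omega> + log_neg (g k \<omega>)" if w: "\<omega> \<in> space M" for k \<omega>
    proof -
      have "L (Suc k) \<omega> = log_neg ((f k \<omega> / c) * g k \<omega>)" unfolding L_def rec[OF w] by simp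
      also have "\<dots> = L k \<omega> + log_neg (g k \<omega>)" unfolding L_def
        using fb[OF w, of k] gb[OF w, of k] c by (intro log_neg_mult) auto
      finally show ?thesis .
    qed
    have Lm: "L k \<in> borel_measurable M" for k unfolding L_def using fm by measurable
    have gm': "(\<lambda>\<omega>. log_neg (g k \<omega>)) \<in> borel_measurable M" for k using gm by measurable
    have step: "b \<le> (\<integral>\<^sup>+\<omega>. log_neg (g k \<omega>) \<partial>M)" for k
    proof -
      have bnd': "\<forall>u\<in>sphere 0 1. b \<le> (\<integral>\<^sup>+\<eta>. log_neg (1 - (norm (proj (W \<eta>) u))\<^sup>2) \<partial>N)"
        using bnd by (simp add: a_def l_def)
      show ?thesis using indep_step[OF sub PN Wm PM Wsm ind dist u0 bnd', of k x x0]
        by (simp add: g_def U_def e_def)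
    qed
    have Aind: "of_nat k * b \<le> (\<integral>\<^sup>+\<omega>. L k \<omega> \<partial>M)" for k
    proof (induction k)
      case 0 then show ?case by simp
    next
      case (Suc k)
      have "(\<integral>\<^sup>+\<omega>. L (Suc k) \<omega> \<partial>M) = (\<integral>\<^sup>+\<omega>. L k \<omega> + log_neg (g k \<omega>) \<partial>M)"
        by (rule nn_integral_cong) (simp add: Lrec)
      also have "\<dots> = (\<integral>\<^sup>+\<omega>. L k \<omega> \<partial>M) + (\<integral>\<^sup>+\<omega>. log_neg (g k \<omega>) \<partial>M)"
        by (rule nn_integral_add[OF Lm gm'])
      finally have eq: "(\<integral>\<^sup>+\<omega>. L (Suc k) \<omega> \<partial>M) = (\<integral>\<^sup>+\<omega>. L k \<omega> \<partial>M) + (\<integral>\<^sup>+\<omega>. log_neg (g k \<omega>) \<partial>M)" .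
      have "of_nat (Suc k) * b = of_nat k * b + b" by (simp add: distrib_right)
      also have "\<dots> \<le> (\<integral>\<^sup>+\<omega>. L k \<omega> \<partial>M) + (\<integral>\<^sup>+\<omega>. log_neg (g k \<omega>) \<partial>M)"
        by (rule add_mono[OF Suc step])
      finally show ?case using eq by simp
    qed
    have "exp_expect_log M (f n) \<le> (if (\<integral>\<^sup>+\<omega>. L n \<omega> \<partial>M) = \<infinity> then 0 else ereal (c * exp (- enn2real (\<integral>\<^sup>+\<omega>. L n \<omega> \<partial>M))))"
      unfolding L_def by (rule eel_bound[OF PM c fm fb])
    also have "\<dots> \<le> \<alpha> ^ n * ereal c"
      by (rule final_cmp[OF al0 al1 c Aind b_def])
    finally show ?thesis unfolding fn \<alpha>_def c_def .
  qed
qed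



theorem theorem3p4:
  shows
  "(\<forall>(N::'n measure) (W::'n \<Rightarrow> (real^'d) set) (M::'m measure) (Ws::nat \<Rightarrow> 'm \<Rightarrow> (real^'d) set)
       (x::real^'d) x0 n.
      prob_space N \<and> W \<in> N \<rightarrow>\<^sub>M subspace_measure {V. subspace V} \<and>
      prob_space M \<and> (\<forall>k\<ge>1. Ws k \<in> M \<rightarrow>\<^sub>M subspace_measure {V. subspace V}) \<and>
      prob_space.indep_vars M (\<lambda>_. subspace_measure {V. subspace V}) Ws {1..} \<and>
      (\<forall>k\<ge>1. distr M (subspace_measure {V. subspace V}) (Ws k)
              = distr N (subspace_measure {V. subspace V}) W)
      \<longrightarrow> exp_expect_log M (\<lambda>\<omega>. (norm (x - kacz (\<lambda>k. Ws k \<omega>) x x0 n))\<^sup>2)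
            \<le> (alpha_log N W) ^ n * ereal ((norm (x - x0))\<^sup>2))
   \<and>
   (\<forall>(N::'n measure) (W::'n \<Rightarrow> (complex^'d) set) (M::'m measure) (Ws::nat \<Rightarrow> 'm \<Rightarrow> (complex^'d) set)
       (x::complex^'d) x0 n.
      prob_space N \<and> W \<in> N \<rightarrow>\<^sub>M subspace_measure {V. complex_subspace V} \<and>
      prob_space M \<and> (\<forall>k\<ge>1. Ws k \<in> M \<rightarrow>\<^sub>M subspace_measure {V. complex_subspace V}) \<and>
      prob_space.indep_vars M (\<lambda>_. subspace_measure {V. complex_subspace V}) Ws {1..} \<and>
      (\<forall>k\<ge>1. distr M (subspace_measure {V. complex_subspace V}) (Ws k)
              = distr N (subspace_measure {V. complex_subspace V}) W)
      \<longrightarrow> exp_expect_log M (\<lambda>\<omega>. (norm (x - kacz (\<lambda>k. Ws k \<omega>) x x0 n))\<^sup>2)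
            \<le> (alpha_log N W) ^ n * ereal ((norm (x - x0))\<^sup>2))"
  apply (intro conjI allI impI)
  subgoal by (rule main_gen[where C="{V. subspace V}"]) auto
  subgoal by (rule main_gen[where C="{V. complex_subspace V}"]) (auto simp: complex_subspace_def)
  done

end
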